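(* A random joint choice rule $p$ on a finite set $X$ is consistent with consumption dependent random utility if and only if it satisfies complete monotonicity and marginality.
   Context: $X$ is finite, $\mathcal{X}$ the nonempty subsets of $X$, $\mathcal{L}(X)$ the linear orders on $X$, $N(x,A)=\{\succ: x\succ y\ \forall y\in A\setminus\{x\}\}$. A random joint choice rule assigns to each $A,B\in\mathcal{X}$ and $(x,y)\in A\times B$ a number $p(x,y,A,B)\ge0$ with $\sum_{x\in A}\sum_{y\in B}p(x,y,A,B)=1$. Its Möbius inverse $q$ is defined by $p(x,y,A,B)=\sum_{A\subseteq A'\subseteq X}\sum_{B\subseteq B'\subseteq X}q(x,y,A',B')$. $p$ is consistent with consumption dependent random utility if there exist $\nu\in\Delta(\mathcal{L}(X))$ and a transition function $t:X\times\mathcal{L}(X)\to\Delta(\mathcal{L}(X))$ (writing $t_{\succ'}(x,\succ)$ for the probability of $\succ'$) with $p(x,y,A,B)=\sum_{\succ\in N(x,A)}\sum_{\succ'\in N(y,B)}\nu(\succ)t_{\succ'}(x,\succ)$ for all $A,B\in\mathcal{X}$, $(x,y)\in A\times B$. Complete monotonicity: $q(x,y,A,B)\ge 0$ for all $A,B\in\mathcal{X}$, $(x,y)\in A\times B$. Marginality: for all $A,B,C\in\mathcal{X}$ and $x\in A$, $\sum_{y\in B}p(x,y,A,B)=\sum_{y\in C}p(x,y,A,C)$. *)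

theory Defs
  imports Complex_Main
begin

text \<open>Strict linear orders on X, as relations contained in X \<times> X
  ((x,y) \<in> r means x \<succ> y).\<close>
definition lin_orders :: "'a set \<Rightarrow> 'a rel set" where
  "lin_orders X = {r. strict_linear_order_on X r \<and> r \<subseteq> X \<times> X}"

definition nonempty_subsets :: "'a set \<Rightarrow> 'a set set" where
  "nonempty_subsets X = {A. A \<subseteq> X \<and> A \<noteq> {}}"

definition N_set :: "'a set \<Rightarrow> 'a \<Rightarrow> 'a set \<Rightarrow> 'a rel set" where
  "N_set X x A = {r \<in> lin_orders X. \<forall>y \<in> A - {x}. (x, y) \<in> r}"

definition random_joint_choice_rule ::
  "'a set \<Rightarrow> ('a \<Rightarrow> 'a \<Rightarrow> 'a set \<Rightarrow> 'a set \<Rightarrow> real) \<Rightarrow> bool" where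
  "random_joint_choice_rule X p \<longleftrightarrow>
     (\<forall>A \<in> nonempty_subsets X. \<forall>B \<in> nonempty_subsets X.
        (\<forall>x \<in> A. \<forall>y \<in> B. p x y A B \<ge> 0) \<and>
        (\<Sum>x\<in>A. \<Sum>y\<in>B. p x y A B) = 1)"

text \<open>Moebius inverse q of p (the unique q with
  p(x,y,A,B) = sum over A \<subseteq> A' \<subseteq> X, B \<subseteq> B' \<subseteq> X of q(x,y,A',B')),
  given by the Moebius inversion formula.\<close>
definition moebius_inverse ::
  "'a set \<Rightarrow> ('a \<Rightarrow> 'a \<Rightarrow> 'a set \<Rightarrow> 'a set \<Rightarrow> real) \<Rightarrow> 'a \<Rightarrow> 'a \<Rightarrow> 'a set \<Rightarrow> 'a set \<Rightarrow> real" where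
  "moebius_inverse X p x y A B =
     (\<Sum>A' \<in> {A'. A \<subseteq> A' \<and> A' \<subseteq> X}. \<Sum>B' \<in> {B'. B \<subseteq> B' \<and> B' \<subseteq> X}.
        (-1) ^ (card (A' - A) + card (B' - B)) * p x y A' B')"

definition complete_monotonicity ::
  "'a set \<Rightarrow> ('a \<Rightarrow> 'a \<Rightarrow> 'a set \<Rightarrow> 'a set \<Rightarrow> real) \<Rightarrow> bool" where
  "complete_monotonicity X p \<longleftrightarrow>
     (\<forall>A \<in> nonempty_subsets X. \<forall>B \<in> nonempty_subsets X. \<forall>x \<in> A. \<forall>y \<in> B.
        moebius_inverse X p x y A B \<ge> 0)"

definition marginality ::
  "'a set \<Rightarrow> ('a \<Rightarrow> 'a \<Rightarrow> 'a set \<Rightarrow> 'a set \<Rightarrow> real) \<Rightarrow> bool" where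
  "marginality X p \<longleftrightarrow>
     (\<forall>A \<in> nonempty_subsets X. \<forall>B \<in> nonempty_subsets X. \<forall>C \<in> nonempty_subsets X.
        \<forall>x \<in> A. (\<Sum>y\<in>B. p x y A B) = (\<Sum>y\<in>C. p x y A C))"

definition is_distribution :: "'a set \<Rightarrow> ('a rel \<Rightarrow> real) \<Rightarrow> bool" where
  "is_distribution X nu \<longleftrightarrow>
     (\<forall>r \<in> lin_orders X. nu r \<ge> 0) \<and> (\<Sum>r \<in> lin_orders X. nu r) = 1"

text \<open>t x r r' is the probability of r' given consumption x under r.\<close>
definition is_transition :: "'a set \<Rightarrow> ('a \<Rightarrow> 'a rel \<Rightarrow> 'a rel \<Rightarrow> real) \<Rightarrow> bool" where
  "is_transition X t \<longleftrightarrow>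
     (\<forall>x \<in> X. \<forall>r \<in> lin_orders X. is_distribution X (t x r))"

definition consistent_with_CDRU ::
  "'a set \<Rightarrow> ('a \<Rightarrow> 'a \<Rightarrow> 'a set \<Rightarrow> 'a set \<Rightarrow> real) \<Rightarrow> bool" where
  "consistent_with_CDRU X p \<longleftrightarrow>
     (\<exists>nu t. is_distribution X nu \<and> is_transition X t \<and>
        (\<forall>A \<in> nonempty_subsets X. \<forall>B \<in> nonempty_subsets X. \<forall>x \<in> A. \<forall>y \<in> B.
           p x y A B = (\<Sum>r \<in> N_set X x A. \<Sum>r' \<in> N_set X y B. nu r * t x r r')))"

end

theory Submission
  imports Defs "HOL-Combinatorics.Multiset_Permutations"
begin


lemma pow_alt:
  assumes "finite D"
  shows "(\<Sum>S\<in>Pow D. (-1::real) ^ card S) = (if D = {} then 1 else 0)"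
  using assms
proof (induction D rule: finite_induct)
  case empty
  then show ?case by simp
next
  case (insert a D)
  have inj: "inj_on (insert a) (Pow D)"
    using insert.hyps by (auto simp: inj_on_def)
  have disj: "Pow D \<inter> insert a ` Pow D = {}" using insert.hyps by auto
  have "(\<Sum>S\<in>Pow (insert a D). (-1::real) ^ card S)
      = (\<Sum>S\<in>Pow D. (-1::real) ^ card S) + (\<Sum>S\<in>insert a ` Pow D. (-1::real) ^ card S)"
    unfolding Pow_insert using insert.hyps disj by (intro sum.union_disjoint) auto
  also have "(\<Sum>S\<in>insert a ` Pow D. (-1::real) ^ card S) = (\<Sum>S\<in>Pow D. (-1::real) ^ card (insert a S))"
    using inj by (simp add: sum.reindex)
  also have "\<dots> = (\<Sum>S\<in>Pow D. - ((-1::real) ^ card S))"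
  proof (rule sum.cong[OF refl])
    fix S assume "S \<in> Pow D"
    then have "finite S" "a \<notin> S" using insert.hyps finite_subset by auto
    then show "(-1::real) ^ card (insert a S) = - ((-1::real) ^ card S)" by simp
  qed
  finally show ?case by (simp add: sum_negf)
qed

lemma alt1:
  assumes "finite L" "A \<subseteq> L"
  shows "(\<Sum>A'\<in>{A'. A \<subseteq> A' \<and> A' \<subseteq> L}. (-1::real) ^ card (A' - A)) = (if A = L then 1 else 0)"
proof -
  have eq: "{A'. A \<subseteq> A' \<and> A' \<subseteq> L} = (\<lambda>S. A \<union> S) ` Pow (L - A)"
  proof
    show "{A'. A \<subseteq> A' \<and> A' \<subseteq> L} \<subseteq> (\<lambda>S. A \<union> S) ` Pow (L - A)"
    proof
      fix A' assume "A' \<in> {A'. A \<subseteq> A' \<and> A' \<subseteq> L}"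
      then have "A' = A \<union> (A' - A)" "A' - A \<in> Pow (L - A)" by auto
      then show "A' \<in> (\<lambda>S. A \<union> S) ` Pow (L - A)" by blast
    qed
  qed (use assms in auto)
  have inj: "inj_on (\<lambda>S. A \<union> S) (Pow (L - A))"
    by (auto simp: inj_on_def)
  have "(\<Sum>A'\<in>{A'. A \<subseteq> A' \<and> A' \<subseteq> L}. (-1::real) ^ card (A' - A))
      = (\<Sum>S\<in>Pow (L - A). (-1::real) ^ card ((A \<union> S) - A))"
    unfolding eq using inj by (simp add: sum.reindex)
  also have "\<dots> = (\<Sum>S\<in>Pow (L - A). (-1::real) ^ card S)"
  proof (rule sum.cong[OF refl])
    fix S assume "S \<in> Pow (L - A)"
    then have "A \<union> S - A = S" by auto
    then show "(-1::real) ^ card ((A \<union> S) - A) = (-1::real) ^ card S" by simp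
  qed
  also have "\<dots> = (if A = L then 1 else 0)"
    using assms by (subst pow_alt) auto
  finally show ?thesis .
qed

lemma alt2:
  assumes "finite L" "A \<subseteq> L"
  shows "(\<Sum>A'\<in>{A'. A \<subseteq> A' \<and> A' \<subseteq> L}. (-1::real) ^ card (L - A')) = (if A = L then 1 else 0)"
proof -
  have eq: "{A'. A \<subseteq> A' \<and> A' \<subseteq> L} = (\<lambda>S. L - S) ` Pow (L - A)"
  proof
    show "{A'. A \<subseteq> A' \<and> A' \<subseteq> L} \<subseteq> (\<lambda>S. L - S) ` Pow (L - A)"
    proof
      fix A' assume "A' \<in> {A'. A \<subseteq> A' \<and> A' \<subseteq> L}"
      then have "A' = L - (L - A')" "L - A' \<in> Pow (L - A)" by auto
      then show "A' \<in> (\<lambda>S. L - S) ` Pow (L - A)" by blast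
    qed
  qed (use assms in auto)
  have inj: "inj_on (\<lambda>S. L - S) (Pow (L - A))"
    by (auto simp: inj_on_def) 
  have "(\<Sum>A'\<in>{A'. A \<subseteq> A' \<and> A' \<subseteq> L}. (-1::real) ^ card (L - A'))
      = (\<Sum>S\<in>Pow (L - A). (-1::real) ^ card (L - (L - S)))"
    unfolding eq using inj by (simp add: sum.reindex)
  also have "\<dots> = (\<Sum>S\<in>Pow (L - A). (-1::real) ^ card S)"
  proof (rule sum.cong[OF refl])
    fix S assume "S \<in> Pow (L - A)"
    then have "L - (L - S) = S" by auto
    then show "(-1::real) ^ card (L - (L - S)) = (-1::real) ^ card S" by simp
  qed
  also have "\<dots> = (if A = L then 1 else 0)"
    using assms by (subst pow_alt) auto
  finally show ?thesis .
qed

lemma finite_sup: "finite X \<Longrightarrow> finite {A'. A \<subseteq> A' \<and> A' \<subseteq> X}"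
  by (rule finite_subset[of _ "Pow X"]) auto

lemma mob1:
  assumes "finite X" "A \<subseteq> X"
  shows "(\<Sum>A'\<in>{A'. A \<subseteq> A' \<and> A' \<subseteq> X}. \<Sum>A''\<in>{A''. A' \<subseteq> A'' \<and> A'' \<subseteq> X}.
            (-1::real) ^ card (A'' - A') * g A'') = g A"
proof -
  let ?U = "{A'. A \<subseteq> A' \<and> A' \<subseteq> X}"
  have "(\<Sum>A'\<in>?U. \<Sum>A''\<in>{A''. A' \<subseteq> A'' \<and> A'' \<subseteq> X}. (-1::real) ^ card (A'' - A') * g A'')
     = (\<Sum>A'\<in>?U. \<Sum>A''\<in>{A''. A'' \<in> ?U \<and> A' \<subseteq> A''}. (-1::real) ^ card (A'' - A') * g A'')"
    by (intro sum.cong refl arg_cong[where f="\<lambda>S. sum _ S"]) auto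
  also have "\<dots> = (\<Sum>A''\<in>?U. \<Sum>A'\<in>{A'. A' \<in> ?U \<and> A' \<subseteq> A''}. (-1::real) ^ card (A'' - A') * g A'')"
    by (rule sum.swap_restrict) (use assms finite_sup in auto)
  also have "\<dots> = (\<Sum>A''\<in>?U. g A'' * (\<Sum>A'\<in>{A'. A \<subseteq> A' \<and> A' \<subseteq> A''}. (-1::real) ^ card (A'' - A')))"
    by (auto simp: sum_distrib_left mult.commute intro!: sum.cong)
  also have "\<dots> = (\<Sum>A''\<in>?U. if A = A'' then g A'' else 0)"
    by (intro sum.cong refl) (use assms in \<open>auto simp: alt2 finite_subset split: if_splits\<close>)
  also have "\<dots> = g A" using assms by (simp add: sum.delta)
  finally show ?thesis .
qed

lemma mob2:
  assumes "finite X" "A \<subseteq> X"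
  shows "(\<Sum>A'\<in>{A'. A \<subseteq> A' \<and> A' \<subseteq> X}. (-1::real) ^ card (A' - A) *
            (\<Sum>A''\<in>{A''. A' \<subseteq> A'' \<and> A'' \<subseteq> X}. h A'')) = h A"
proof -
  let ?U = "{A'. A \<subseteq> A' \<and> A' \<subseteq> X}"
  have "(\<Sum>A'\<in>?U. (-1::real) ^ card (A' - A) * (\<Sum>A''\<in>{A''. A' \<subseteq> A'' \<and> A'' \<subseteq> X}. h A''))
     = (\<Sum>A'\<in>?U. \<Sum>A''\<in>{A''. A'' \<in> ?U \<and> A' \<subseteq> A''}. (-1::real) ^ card (A' - A) * h A'')"
    by (auto simp: sum_distrib_left intro!: sum.cong)
  also have "\<dots> = (\<Sum>A''\<in>?U. \<Sum>A'\<in>{A'. A' \<in> ?U \<and> A' \<subseteq> A''}. (-1::real) ^ card (A' - A) * h A'')"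
    by (rule sum.swap_restrict) (use assms finite_sup in auto)
  also have "\<dots> = (\<Sum>A''\<in>?U. h A'' * (\<Sum>A'\<in>{A'. A \<subseteq> A' \<and> A' \<subseteq> A''}. (-1::real) ^ card (A' - A)))"
    by (auto simp: sum_distrib_left mult.commute intro!: sum.cong)
  also have "\<dots> = (\<Sum>A''\<in>?U. if A = A'' then h A'' else 0)"
    by (intro sum.cong refl) (use assms in \<open>auto simp: alt1 finite_subset split: if_splits\<close>)
  also have "\<dots> = h A" using assms by (simp add: sum.delta)
  finally show ?thesis .
qed

lemma mob1_2:
  assumes "finite X" "A \<subseteq> X" "B \<subseteq> X"
  shows "(\<Sum>A'\<in>{A'. A \<subseteq> A' \<and> A' \<subseteq> X}. \<Sum>B'\<in>{B'. B \<subseteq> B' \<and> B' \<subseteq> X}.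
           (\<Sum>A''\<in>{A''. A' \<subseteq> A'' \<and> A'' \<subseteq> X}. \<Sum>B''\<in>{B''. B' \<subseteq> B'' \<and> B'' \<subseteq> X}.
            (-1::real) ^ (card (A'' - A') + card (B'' - B')) * g A'' B'')) = g A B"
proof -
  define hB where "hB A'' B' = (\<Sum>B''\<in>{B''. B' \<subseteq> B'' \<and> B'' \<subseteq> X}. (-1::real) ^ card (B'' - B') * g A'' B'')" for A'' B'
  have inner: "(\<Sum>A''\<in>{A''. A' \<subseteq> A'' \<and> A'' \<subseteq> X}. \<Sum>B''\<in>{B''. B' \<subseteq> B'' \<and> B'' \<subseteq> X}.
            (-1::real) ^ (card (A'' - A') + card (B'' - B')) * g A'' B'')
      = (\<Sum>A''\<in>{A''. A' \<subseteq> A'' \<and> A'' \<subseteq> X}. (-1::real) ^ card (A'' - A') * hB A'' B')" for A' B'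
    by (simp add: hB_def power_add sum_distrib_left mult.assoc)
  have "?thesis \<longleftrightarrow> (\<Sum>A'\<in>{A'. A \<subseteq> A' \<and> A' \<subseteq> X}. \<Sum>B'\<in>{B'. B \<subseteq> B' \<and> B' \<subseteq> X}.
          (\<Sum>A''\<in>{A''. A' \<subseteq> A'' \<and> A'' \<subseteq> X}. (-1::real) ^ card (A'' - A') * hB A'' B')) = g A B"
    by (simp only: inner)
  also have "(\<Sum>A'\<in>{A'. A \<subseteq> A' \<and> A' \<subseteq> X}. \<Sum>B'\<in>{B'. B \<subseteq> B' \<and> B' \<subseteq> X}.
          (\<Sum>A''\<in>{A''. A' \<subseteq> A'' \<and> A'' \<subseteq> X}. (-1::real) ^ card (A'' - A') * hB A'' B'))
     = (\<Sum>B'\<in>{B'. B \<subseteq> B' \<and> B' \<subseteq> X}. \<Sum>A'\<in>{A'. A \<subseteq> A' \<and> A' \<subseteq> X}.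
          (\<Sum>A''\<in>{A''. A' \<subseteq> A'' \<and> A'' \<subseteq> X}. (-1::real) ^ card (A'' - A') * hB A'' B'))"
    by (rule sum.swap)
  also have "\<dots> = (\<Sum>B'\<in>{B'. B \<subseteq> B' \<and> B' \<subseteq> X}. hB A B')"
    by (intro sum.cong refl mob1 assms)
  also have "\<dots> = g A B" unfolding hB_def by (rule mob1[OF assms(1,3)])
  finally show ?thesis by simp
qed

lemma mob2_2:
  assumes "finite X" "A \<subseteq> X" "B \<subseteq> X"
  shows "(\<Sum>A'\<in>{A'. A \<subseteq> A' \<and> A' \<subseteq> X}. \<Sum>B'\<in>{B'. B \<subseteq> B' \<and> B' \<subseteq> X}.
           (-1::real) ^ (card (A' - A) + card (B' - B)) *
           (\<Sum>A''\<in>{A''. A' \<subseteq> A'' \<and> A'' \<subseteq> X}. \<Sum>B''\<in>{B''. B' \<subseteq> B'' \<and> B'' \<subseteq> X}. h A'' B'')) = h A B"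
proof -
  have "(\<Sum>A'\<in>{A'. A \<subseteq> A' \<and> A' \<subseteq> X}. \<Sum>B'\<in>{B'. B \<subseteq> B' \<and> B' \<subseteq> X}.
           (-1::real) ^ (card (A' - A) + card (B' - B)) *
           (\<Sum>A''\<in>{A''. A' \<subseteq> A'' \<and> A'' \<subseteq> X}. \<Sum>B''\<in>{B''. B' \<subseteq> B'' \<and> B'' \<subseteq> X}. h A'' B''))
     = (\<Sum>A'\<in>{A'. A \<subseteq> A' \<and> A' \<subseteq> X}. (-1::real) ^ card (A' - A) * (\<Sum>B'\<in>{B'. B \<subseteq> B' \<and> B' \<subseteq> X}.
           \<Sum>A''\<in>{A''. A' \<subseteq> A'' \<and> A'' \<subseteq> X}. (-1::real) ^ card (B' - B) *
           (\<Sum>B''\<in>{B''. B' \<subseteq> B'' \<and> B'' \<subseteq> X}. h A'' B'')))"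
    by (simp add: power_add sum_distrib_left mult.assoc)
  also have "\<dots> = (\<Sum>A'\<in>{A'. A \<subseteq> A' \<and> A' \<subseteq> X}. (-1::real) ^ card (A' - A) * (
           \<Sum>A''\<in>{A''. A' \<subseteq> A'' \<and> A'' \<subseteq> X}. \<Sum>B'\<in>{B'. B \<subseteq> B' \<and> B' \<subseteq> X}. (-1::real) ^ card (B' - B) *
           (\<Sum>B''\<in>{B''. B' \<subseteq> B'' \<and> B'' \<subseteq> X}. h A'' B'')))"
    by (simp only: sum.swap[of _ "{B'. B \<subseteq> B' \<and> B' \<subseteq> X}"])
  also have "\<dots> = (\<Sum>A'\<in>{A'. A \<subseteq> A' \<and> A' \<subseteq> X}. (-1::real) ^ card (A' - A) * (
           \<Sum>A''\<in>{A''. A' \<subseteq> A'' \<and> A'' \<subseteq> X}. h A'' B))"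
    by (simp only: mob2[OF assms(1,3)])
  also have "\<dots> = h A B" by (rule mob2[OF assms(1,2)])
  finally show ?thesis .
qed

lemma flow:
  assumes X: "finite X" and A: "A \<subseteq> X" "A \<noteq> {}" "A \<noteq> X"
    and m: "\<And>B. B \<subseteq> X \<Longrightarrow> B \<noteq> {} \<Longrightarrow> (\<Sum>x\<in>B. m x B) = (c::real)"
  shows "(\<Sum>x\<in>A. \<Sum>A'\<in>{A'. A \<subseteq> A' \<and> A' \<subseteq> X}. (-1::real) ^ card (A' - A) * m x A')
       = (\<Sum>y\<in>X - A. \<Sum>A'\<in>{A'. insert y A \<subseteq> A' \<and> A' \<subseteq> X}. (-1::real) ^ card (A' - insert y A) * m y A')"
proof -
  let ?U = "{A'. A \<subseteq> A' \<and> A' \<subseteq> X}"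
  let ?s = "\<lambda>A'. (-1::real) ^ card (A' - A)"
  have fU: "finite ?U" using finite_sup[OF X] .
  have r1: "(\<Sum>A'\<in>{A'. insert y A \<subseteq> A' \<and> A' \<subseteq> X}. (-1::real) ^ card (A' - insert y A) * m y A')
       = (\<Sum>A'\<in>{A'. A' \<in> ?U \<and> y \<in> A'}. - (?s A' * m y A'))" if y: "y \<in> X - A" for y
  proof (rule sum.cong)
    show "{A'. insert y A \<subseteq> A' \<and> A' \<subseteq> X} = {A'. A' \<in> ?U \<and> y \<in> A'}" by auto
  next
    fix A' assume "A' \<in> {A'. A' \<in> ?U \<and> y \<in> A'}"
    then have "A' - A = insert y (A' - insert y A)" "finite (A' - insert y A)" "y \<notin> A' - insert y A"
      using y X finite_subset by auto
    then have "card (A' - A) = Suc (card (A' - insert y A))" by (metis card_insert_disjoint)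
    then show "(-1::real) ^ card (A' - insert y A) * m y A' = - (?s A' * m y A')" by simp
  qed
  have "(\<Sum>y\<in>X - A. \<Sum>A'\<in>{A'. insert y A \<subseteq> A' \<and> A' \<subseteq> X}. (-1::real) ^ card (A' - insert y A) * m y A')
     = (\<Sum>y\<in>X - A. \<Sum>A'\<in>{A'. A' \<in> ?U \<and> y \<in> A'}. - (?s A' * m y A'))"
    using r1 by simp
  also have "\<dots> = (\<Sum>A'\<in>?U. \<Sum>y\<in>{y. y \<in> X - A \<and> y \<in> A'}. - (?s A' * m y A'))"
    by (rule sum.swap_restrict) (use X fU in auto)
  also have "\<dots> = (\<Sum>A'\<in>?U. - (?s A' * (\<Sum>y\<in>A' - A. m y A')))"
  proof (rule sum.cong[OF refl])
    fix A' assume "A' \<in> ?U"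
    then have "{y. y \<in> X - A \<and> y \<in> A'} = A' - A" by auto
    then show "(\<Sum>y\<in>{y. y \<in> X - A \<and> y \<in> A'}. - (?s A' * m y A')) = - (?s A' * (\<Sum>y\<in>A' - A. m y A'))"
      by (simp add: sum_distrib_left sum_negf)
  qed
  finally have R: "(\<Sum>y\<in>X - A. \<Sum>A'\<in>{A'. insert y A \<subseteq> A' \<and> A' \<subseteq> X}. (-1::real) ^ card (A' - insert y A) * m y A')
      = (\<Sum>A'\<in>?U. - (?s A' * (\<Sum>y\<in>A' - A. m y A')))" .
  have L: "(\<Sum>x\<in>A. \<Sum>A'\<in>?U. ?s A' * m x A') = (\<Sum>A'\<in>?U. ?s A' * (\<Sum>x\<in>A. m x A'))"
    by (subst sum.swap) (simp add: sum_distrib_left)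
  have "(\<Sum>A'\<in>?U. ?s A' * (\<Sum>x\<in>A. m x A')) - (\<Sum>A'\<in>?U. - (?s A' * (\<Sum>y\<in>A' - A. m y A')))
      = (\<Sum>A'\<in>?U. ?s A' * ((\<Sum>x\<in>A. m x A') + (\<Sum>y\<in>A' - A. m y A')))"
    by (simp only: sum_negf diff_minus_eq_add sum.distrib[symmetric] distrib_left)
  also have "\<dots> = (\<Sum>A'\<in>?U. ?s A' * c)"
  proof (rule sum.cong[OF refl])
    fix A' assume A': "A' \<in> ?U"
    then have fA': "finite A'" using X finite_subset by auto
    have "(\<Sum>x\<in>A. m x A') + (\<Sum>y\<in>A' - A. m y A') = (\<Sum>x\<in>A \<union> (A' - A). m x A')"
      by (rule sum.union_disjoint[symmetric]) (use fA' A' finite_subset in auto)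
    also have "A \<union> (A' - A) = A'" using A' by auto
    also have "(\<Sum>x\<in>A'. m x A') = c" using A' A by (intro m) auto
    finally show "?s A' * ((\<Sum>x\<in>A. m x A') + (\<Sum>y\<in>A' - A. m y A')) = ?s A' * c" by simp
  qed
  also have "\<dots> = c * (\<Sum>A'\<in>?U. ?s A')" by (simp add: sum_distrib_left mult.commute)
  also have "\<dots> = 0" using alt1[OF X A(1)] A by simp
  finally have "(\<Sum>A'\<in>?U. ?s A' * (\<Sum>x\<in>A. m x A')) - (\<Sum>A'\<in>?U. - (?s A' * (\<Sum>y\<in>A' - A. m y A'))) = 0" .
  then show ?thesis using L R by linarith
qed



primrec rel_of :: "'a list \<Rightarrow> 'a rel" where
  "rel_of [] = {}"
| "rel_of (x # xs) = {x} \<times> set xs \<union> rel_of xs"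

lemma rel_of_sub: "rel_of xs \<subseteq> set xs \<times> set xs"
  by (induction xs) auto

lemma rel_of_append: "rel_of (ys @ zs) = rel_of ys \<union> set ys \<times> set zs \<union> rel_of zs"
  by (induction ys) auto

lemma rel_of_props:
  assumes "distinct xs"
  shows "trans (rel_of xs) \<and> irrefl (rel_of xs) \<and> total_on (set xs) (rel_of xs)"
  using assms
proof (induction xs)
  case Nil
  then show ?case by (auto simp: trans_def irrefl_def total_on_def)
next
  case (Cons x xs)
  then have IH: "trans (rel_of xs)" "irrefl (rel_of xs)" "total_on (set xs) (rel_of xs)" and nx: "x \<notin> set xs"
    by auto
  have sub: "rel_of xs \<subseteq> set xs \<times> set xs" by (rule rel_of_sub)
  have "trans (rel_of (x # xs))"
    using IH(1) sub nx unfolding trans_def by auto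
  moreover have "irrefl (rel_of (x # xs))"
    using IH(2) sub nx unfolding irrefl_def by auto
  moreover have "total_on (set (x # xs)) (rel_of (x # xs))"
    using IH(3) unfolding total_on_def by auto
  ultimately show ?case by blast
qed

lemma rel_of_lin: "xs \<in> permutations_of_set X \<Longrightarrow> rel_of xs \<in> lin_orders X"
  using rel_of_props[of xs] rel_of_sub[of xs]
  by (auto simp: lin_orders_def strict_linear_order_on_def permutations_of_set_def)

definition Lof :: "'a \<Rightarrow> 'a rel \<Rightarrow> 'a set" where
  "Lof x r = insert x (r `` {x})"

lemma Lof_app:
  assumes "distinct (ys @ x # zs)"
  shows "Lof x (rel_of (ys @ x # zs)) = insert x (set zs)"
  using assms rel_of_sub[of ys] rel_of_sub[of zs]
  by (auto simp: Lof_def rel_of_append)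

lemma finite_lin: "finite X \<Longrightarrow> finite (lin_orders X)"
  by (rule finite_subset[of _ "Pow (X \<times> X)"]) (auto simp: lin_orders_def)

primrec wa :: "('a \<Rightarrow> 'a set \<Rightarrow> real) \<Rightarrow> 'a set \<Rightarrow> 'a list \<Rightarrow> real" where
  "wa f E [] = 1"
| "wa f E (x # xs) = f x (insert x (set xs \<union> E)) * wa f E xs"

lemma wa_append: "wa f E (ys @ zs) = wa f (set zs \<union> E) ys * wa f E zs"
  by (induction ys) (auto simp: Un_assoc)

lemma perm_top:
  assumes "finite C" "C \<noteq> {}"
  shows "(\<Sum>xs\<in>permutations_of_set C. g xs) = (\<Sum>y\<in>C. \<Sum>xs\<in>permutations_of_set (C - {y}). g (y # xs))"
proof -
  have "(\<Sum>xs\<in>permutations_of_set C. g xs)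
      = (\<Sum>xs\<in>(\<Union>y\<in>C. (\<lambda>xs. y # xs) ` permutations_of_set (C - {y})). g xs)"
    using permutations_of_set_nonempty[OF assms(2)] by simp
  also have "\<dots> = (\<Sum>y\<in>C. \<Sum>xs\<in>(\<lambda>xs. y # xs) ` permutations_of_set (C - {y}). g xs)"
    by (rule sum.UNION_disjoint) (use assms in auto)
  also have "\<dots> = (\<Sum>y\<in>C. \<Sum>xs\<in>permutations_of_set (C - {y}). g (y # xs))"
    by (rule sum.cong[OF refl], subst sum.reindex) (auto simp: inj_on_def)
  finally show ?thesis .
qed

lemma rev_perm: "xs \<in> permutations_of_set A \<Longrightarrow> rev xs \<in> permutations_of_set A"
  by (simp add: permutations_of_set_def)

lemma perm_bot:
  assumes "finite C" "C \<noteq> {}"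
  shows "(\<Sum>xs\<in>permutations_of_set C. g xs) = (\<Sum>y\<in>C. \<Sum>xs\<in>permutations_of_set (C - {y}). g (xs @ [y]))"
proof -
  have "(\<Sum>xs\<in>permutations_of_set C. g xs) = (\<Sum>xs\<in>permutations_of_set C. g (rev xs))"
    by (rule sum.reindex_bij_witness[of _ rev rev]) (auto simp: rev_perm)
  also have "\<dots> = (\<Sum>y\<in>C. \<Sum>xs\<in>permutations_of_set (C - {y}). g (rev xs @ [y]))"
    by (subst perm_top[OF assms]) simp
  also have "\<dots> = (\<Sum>y\<in>C. \<Sum>xs\<in>permutations_of_set (C - {y}). g (xs @ [y]))"
    by (rule sum.cong[OF refl], rule sum.reindex_bij_witness[of _ rev rev]) (auto simp: rev_perm)
  finally show ?thesis .
qed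

context
  fixes X :: "'a set" and q :: "'a \<Rightarrow> 'a set \<Rightarrow> real"
  assumes finX: "finite X"
    and qnn: "\<And>x A. A \<subseteq> X \<Longrightarrow> x \<in> A \<Longrightarrow> q x A \<ge> 0"
    and qtot: "(\<Sum>x\<in>X. q x X) = 1"
    and qflow: "\<And>A. A \<subseteq> X \<Longrightarrow> A \<noteq> {} \<Longrightarrow> A \<noteq> X \<Longrightarrow>
                  (\<Sum>x\<in>A. q x A) = (\<Sum>y\<in>X - A. q y (insert y A))"
begin

definition QQ :: "'a set \<Rightarrow> real" where "QQ A = (\<Sum>x\<in>A. q x A)"
definition ff :: "'a \<Rightarrow> 'a set \<Rightarrow> real" where "ff x A = q x A / QQ A"

lemma QQ_nn: "A \<subseteq> X \<Longrightarrow> QQ A \<ge> 0"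
  unfolding QQ_def by (intro sum_nonneg qnn) auto

lemma q_le_QQ: "A \<subseteq> X \<Longrightarrow> x \<in> A \<Longrightarrow> q x A \<le> QQ A"
  unfolding QQ_def by (rule member_le_sum) (auto intro: qnn finite_subset[OF _ finX])

lemma ff_QQ: "A \<subseteq> X \<Longrightarrow> x \<in> A \<Longrightarrow> QQ A * ff x A = q x A"
proof -
  assume a: "A \<subseteq> X" "x \<in> A"
  show ?thesis
  proof (cases "QQ A = 0")
    case True
    then have "q x A = 0" using q_le_QQ[OF a] qnn[OF a] by linarith
    then show ?thesis by (simp add: ff_def)
  qed (simp add: ff_def)
qed

lemma ff_nn: "A \<subseteq> X \<Longrightarrow> x \<in> A \<Longrightarrow> ff x A \<ge> 0"
  unfolding ff_def using qnn QQ_nn by simp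

lemma pos_down:
  assumes "B \<subseteq> X" "x \<in> B" "q x B > 0" "B - {x} \<noteq> {}"
  shows "QQ (B - {x}) > 0"
proof -
  have xX: "x \<in> X - (B - {x})" using assms by auto
  have "QQ (B - {x}) = (\<Sum>y\<in>X - (B - {x}). q y (insert y (B - {x})))"
    unfolding QQ_def using assms by (intro qflow) auto
  also have "\<dots> \<ge> q x (insert x (B - {x}))"
    by (rule member_le_sum[OF xX]) (use assms finX in \<open>auto intro: qnn\<close>)
  finally show ?thesis using assms insert_Diff by fastforce
qed

lemma wa_nn: "set xs \<union> E \<subseteq> X \<Longrightarrow> wa ff E xs \<ge> 0"
  by (induction xs) (auto intro!: mult_nonneg_nonneg ff_nn)

lemma S_one:
  assumes "B \<subseteq> X" "B \<noteq> {}" "QQ B > 0"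
  shows "(\<Sum>xs\<in>permutations_of_set B. wa ff {} xs) = 1"
  using assms
proof (induction "card B" arbitrary: B rule: less_induct)
  case less
  have fB: "finite B" using less.prems finX finite_subset by auto
  have "(\<Sum>xs\<in>permutations_of_set B. wa ff {} xs)
      = (\<Sum>y\<in>B. \<Sum>xs\<in>permutations_of_set (B - {y}). wa ff {} (y # xs))"
    by (rule perm_top[OF fB less.prems(2)])
  also have "\<dots> = (\<Sum>y\<in>B. ff y B * (\<Sum>xs\<in>permutations_of_set (B - {y}). wa ff {} xs))"
  proof (rule sum.cong[OF refl])
    fix y assume y: "y \<in> B"
    have "wa ff {} (y # xs) = ff y B * wa ff {} xs" if "xs \<in> permutations_of_set (B - {y})" for xs
    proof -
      have "insert y (set xs \<union> {}) = B" using that y by (auto simp: permutations_of_set_def)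
      then show ?thesis by simp
    qed
    then show "(\<Sum>xs\<in>permutations_of_set (B - {y}). wa ff {} (y # xs))
        = ff y B * (\<Sum>xs\<in>permutations_of_set (B - {y}). wa ff {} xs)"
      by (simp only: sum_distrib_left) (rule sum.cong, auto)
  qed
  also have "\<dots> = (\<Sum>y\<in>B. ff y B)"
  proof (rule sum.cong[OF refl])
    fix y assume y: "y \<in> B"
    show "ff y B * (\<Sum>xs\<in>permutations_of_set (B - {y}). wa ff {} xs) = ff y B"
    proof (cases "q y B = 0")
      case True then show ?thesis by (simp add: ff_def)
    next
      case False
      then have pos: "q y B > 0" using qnn[OF less.prems(1) y] by linarith
      show ?thesis
      proof (cases "B - {y} = {}")
        case True then show ?thesis by (simp only: True) simp
      next
        case False
        have "card (B - {y}) < card B" using fB y by (rule card_Diff1_less)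
        moreover have "QQ (B - {y}) > 0" by (rule pos_down[OF less.prems(1) y pos False])
        ultimately have "(\<Sum>xs\<in>permutations_of_set (B - {y}). wa ff {} xs) = 1"
          using less.hyps[of "B - {y}"] less.prems False by auto
        then show ?thesis by simp
      qed
    qed
  qed
  also have "\<dots> = QQ B / QQ B" unfolding ff_def QQ_def by (rule sum_divide_distrib[symmetric])
  also have "\<dots> = 1" using less.prems by simp
  finally show ?case .
qed

lemma R_eq:
  assumes "A \<subseteq> X" "A \<noteq> {}"
  shows "(\<Sum>ys\<in>permutations_of_set (X - A). wa ff A ys) = QQ A"
  using assms
proof (induction "card (X - A)" arbitrary: A rule: less_induct)
  case less
  show ?case
  proof (cases "A = X")
    case True
    then show ?thesis using qtot by (simp add: QQ_def)
  next
    case False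
    have fC: "finite (X - A)" using finX by simp
    have Cne: "X - A \<noteq> {}" using False less.prems by auto
    have "(\<Sum>ys\<in>permutations_of_set (X - A). wa ff A ys)
       = (\<Sum>y\<in>X - A. \<Sum>ys\<in>permutations_of_set (X - A - {y}). wa ff A (ys @ [y]))"
      by (rule perm_bot[OF fC Cne])
    also have "\<dots> = (\<Sum>y\<in>X - A. q y (insert y A))"
    proof (rule sum.cong[OF refl])
      fix y assume y: "y \<in> X - A"
      have eq: "X - A - {y} = X - insert y A" by auto
      have "(\<Sum>ys\<in>permutations_of_set (X - A - {y}). wa ff A (ys @ [y]))
          = (\<Sum>ys\<in>permutations_of_set (X - insert y A). wa ff (insert y A) ys) * ff y (insert y A)"
        by (simp add: eq wa_append sum_distrib_right)
      also have "(\<Sum>ys\<in>permutations_of_set (X - insert y A). wa ff (insert y A) ys) = QQ (insert y A)"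
      proof (rule less.hyps)
        show "card (X - insert y A) < card (X - A)"
          using y fC by (metis eq card_Diff1_less)
      qed (use y less.prems in auto)
      also have "QQ (insert y A) * ff y (insert y A) = q y (insert y A)"
        using y less.prems by (intro ff_QQ) auto
      finally show "(\<Sum>ys\<in>permutations_of_set (X - A - {y}). wa ff A (ys @ [y])) = q y (insert y A)" .
    qed
    also have "\<dots> = QQ A" unfolding QQ_def using less.prems False by (intro qflow[symmetric]) auto
    finally show ?thesis .
  qed
qed

lemma main_eq:
  assumes A: "A \<subseteq> X" "x \<in> A"
  shows "(\<Sum>xs\<in>{xs\<in>permutations_of_set X. Lof x (rel_of xs) = A}. wa ff {} xs) = q x A"
proof -
  let ?h = "\<lambda>(ys, zs). ys @ x # zs"
  let ?P = "permutations_of_set (X - A) \<times> permutations_of_set (A - {x})"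
  have seteq: "{xs\<in>permutations_of_set X. Lof x (rel_of xs) = A} = ?h ` ?P"
  proof
    show "{xs\<in>permutations_of_set X. Lof x (rel_of xs) = A} \<subseteq> ?h ` ?P"
    proof
      fix xs assume xs: "xs \<in> {xs\<in>permutations_of_set X. Lof x (rel_of xs) = A}"
      then have d: "distinct xs" "set xs = X" and L: "Lof x (rel_of xs) = A"
        by (auto simp: permutations_of_set_def)
      then have "x \<in> set xs" using A by auto
      then obtain ys zs where xs_eq: "xs = ys @ x # zs" by (meson split_list)
      have "insert x (set zs) = A" using L d(1) Lof_app[of ys x zs] xs_eq by simp
      moreover have "x \<notin> set zs" "x \<notin> set ys" "set ys \<inter> set zs = {}" "distinct ys" "distinct zs"
        using d(1) xs_eq by auto
      ultimately have "set zs = A - {x}" "set ys = X - A" using d(2) xs_eq by auto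
      then have "(ys, zs) \<in> ?P" using \<open>distinct ys\<close> \<open>distinct zs\<close> by (auto simp: permutations_of_set_def)
      then show "xs \<in> ?h ` ?P" using xs_eq by (intro rev_image_eqI[of "(ys, zs)"]) auto
    qed
  next
    show "?h ` ?P \<subseteq> {xs\<in>permutations_of_set X. Lof x (rel_of xs) = A}"
    proof
      fix xs assume "xs \<in> ?h ` ?P"
      then obtain ys zs where xs_eq: "xs = ys @ x # zs" and ys: "ys \<in> permutations_of_set (X - A)"
        and zs: "zs \<in> permutations_of_set (A - {x})" by auto
      have d: "distinct xs" using ys zs A xs_eq by (auto simp: permutations_of_set_def)
      have "set xs = X" using ys zs A xs_eq by (auto simp: permutations_of_set_def)
      moreover have "Lof x (rel_of xs) = A" using Lof_app[of ys x zs] d xs_eq zs A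
        by (auto simp: permutations_of_set_def)
      ultimately show "xs \<in> {xs\<in>permutations_of_set X. Lof x (rel_of xs) = A}"
        using d by (auto simp: permutations_of_set_def)
    qed
  qed
  have inj: "inj_on ?h ?P"
  proof (rule inj_onI)
    fix a b assume "a \<in> ?P" "b \<in> ?P" "?h a = ?h b"
    then show "a = b"
      by (cases a; cases b) (auto simp: length_finite_permutations_of_set append_eq_append_conv)
  qed
  have S1: "(\<Sum>zs\<in>permutations_of_set (A - {x}). wa ff {} zs) = 1" if pos: "q x A > 0"
  proof (cases "A - {x} = {}")
    case True then show ?thesis by (simp only: True) simp
  next
    case False
    show ?thesis by (rule S_one) (use A pos_down[OF A pos False] False in auto)
  qed
  have "(\<Sum>xs\<in>{xs\<in>permutations_of_set X. Lof x (rel_of xs) = A}. wa ff {} xs)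
      = (\<Sum>p\<in>?P. wa ff {} (?h p))"
    unfolding seteq using inj by (simp add: sum.reindex)
  also have "\<dots> = (\<Sum>ys\<in>permutations_of_set (X - A). \<Sum>zs\<in>permutations_of_set (A - {x}). wa ff {} (ys @ x # zs))"
    by (simp add: sum.cartesian_product split_beta)
  also have "\<dots> = (\<Sum>ys\<in>permutations_of_set (X - A). \<Sum>zs\<in>permutations_of_set (A - {x}).
                        wa ff A ys * (ff x A * wa ff {} zs))"
  proof (intro sum.cong refl)
    fix ys zs assume "zs \<in> permutations_of_set (A - {x})"
    then have "set (x # zs) \<union> {} = A" "insert x (set zs \<union> {}) = A" using A by (auto simp: permutations_of_set_def)
    then show "wa ff {} (ys @ x # zs) = wa ff A ys * (ff x A * wa ff {} zs)"
      by (simp only: wa_append wa.simps)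
  qed
  also have "\<dots> = (\<Sum>ys\<in>permutations_of_set (X - A). wa ff A ys) * ff x A *
                    (\<Sum>zs\<in>permutations_of_set (A - {x}). wa ff {} zs)"
    by (simp only: sum_distrib_left sum_distrib_right mult.assoc) (rule sum.swap)
  also have "\<dots> = q x A * (\<Sum>zs\<in>permutations_of_set (A - {x}). wa ff {} zs)"
    using R_eq[of A] A ff_QQ[OF A] by (metis empty_iff)
  also have "\<dots> = q x A"
  proof (cases "q x A = 0")
    case False
    then have "q x A > 0" using qnn[OF A] by linarith
    then show ?thesis using S1 by simp
  qed simp
  finally show ?thesis .
qed

lemma fal_exists:
  "\<exists>\<nu>. (\<forall>r. \<nu> r \<ge> 0) \<and> (\<Sum>r\<in>lin_orders X. \<nu> r) = 1 \<and>
      (\<forall>A x. A \<subseteq> X \<longrightarrow> x \<in> A \<longrightarrow> (\<Sum>r\<in>{r\<in>lin_orders X. Lof x r = A}. \<nu> r) = q x A)"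
proof -
  define \<nu> where "\<nu> r = (\<Sum>xs\<in>{xs\<in>permutations_of_set X. rel_of xs = r}. wa ff {} xs)" for r
  have Xne: "X \<noteq> {}" using qtot by auto
  have "\<nu> r \<ge> 0" for r
    unfolding \<nu>_def by (intro sum_nonneg wa_nn) (auto simp: permutations_of_set_def)
  moreover have "(\<Sum>r\<in>lin_orders X. \<nu> r) = 1"
  proof -
    have "(\<Sum>r\<in>lin_orders X. \<nu> r) = (\<Sum>xs\<in>permutations_of_set X. wa ff {} xs)"
      unfolding \<nu>_def by (rule sum.group) (auto simp: finite_lin finX rel_of_lin)
    also have "\<dots> = 1" by (rule S_one) (use Xne qtot in \<open>auto simp: QQ_def\<close>)
    finally show ?thesis .
  qed
  moreover have "(\<Sum>r\<in>{r\<in>lin_orders X. Lof x r = A}. \<nu> r) = q x A" if A: "A \<subseteq> X" "x \<in> A" for A x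
  proof -
    have "(\<Sum>r\<in>{r\<in>lin_orders X. Lof x r = A}. \<nu> r)
        = (\<Sum>r\<in>{r\<in>lin_orders X. Lof x r = A}.
             \<Sum>xs\<in>{xs. xs \<in> {xs\<in>permutations_of_set X. Lof x (rel_of xs) = A} \<and> rel_of xs = r}. wa ff {} xs)"
      unfolding \<nu>_def by (intro sum.cong refl arg_cong[where f="\<lambda>S. sum _ S"]) auto
    also have "\<dots> = (\<Sum>xs\<in>{xs\<in>permutations_of_set X. Lof x (rel_of xs) = A}. wa ff {} xs)"
      by (rule sum.group) (auto simp: finite_lin finX rel_of_lin)
    also have "\<dots> = q x A" by (rule main_eq[OF A])
    finally show ?thesis .
  qed
  ultimately show ?thesis by blast
qed

end


lemma Lof_sub: "r \<in> lin_orders X \<Longrightarrow> x \<in> X \<Longrightarrow> Lof x r \<subseteq> X"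
  by (auto simp: Lof_def lin_orders_def)

lemma lin_max:
  assumes "r \<in> lin_orders X" "B \<subseteq> X" "B \<noteq> {}" "finite B"
  shows "\<exists>y\<in>B. \<forall>z\<in>B - {y}. (y, z) \<in> r"
  using assms(4,3,2)
proof (induction B rule: finite_ne_induct)
  case (singleton a)
  then show ?case by auto
next
  case (insert a B)
  from insert obtain y where y: "y \<in> B" "\<forall>z\<in>B - {y}. (y, z) \<in> r" by auto
  have lin: "trans r" "total_on X r" using assms(1) by (auto simp: lin_orders_def strict_linear_order_on_def)
  have ay: "a \<noteq> y" using insert y by auto
  have "a \<in> X" "y \<in> X" using insert y by auto
  then have "(a, y) \<in> r \<or> (y, a) \<in> r" using lin(2) ay by (auto simp: total_on_def)
  then show ?case
  proof
    assume ar: "(a, y) \<in> r"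
    have "\<forall>z\<in>insert a B - {a}. (a, z) \<in> r"
      using y ar lin(1) by (auto dest: transD)
    then show ?thesis by blast
  next
    assume "(y, a) \<in> r"
    then have "\<forall>z\<in>insert a B - {y}. (y, z) \<in> r" using y by auto
    then show ?thesis using y by blast
  qed
qed

lemma part:
  assumes "finite X" "B \<subseteq> X" "B \<noteq> {}"
  shows "(\<Sum>y\<in>B. \<Sum>r\<in>N_set X y B. g r) = (\<Sum>r\<in>lin_orders X. g r)"
proof -
  have fB: "finite B" using assms finite_subset by auto
  have eq: "lin_orders X = (\<Union>y\<in>B. N_set X y B)"
  proof
    show "lin_orders X \<subseteq> (\<Union>y\<in>B. N_set X y B)"
      using lin_max[OF _ assms(2,3) fB] by (fastforce simp: N_set_def)
  qed (auto simp: N_set_def)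
  have disj: "N_set X y B \<inter> N_set X y' B = {}" if "y \<in> B" "y' \<in> B" "y \<noteq> y'" for y y'
  proof (rule ccontr)
    assume "N_set X y B \<inter> N_set X y' B \<noteq> {}"
    then obtain r where r: "r \<in> N_set X y B" "r \<in> N_set X y' B" by auto
    then have "(y, y') \<in> r" "(y', y) \<in> r" "trans r" "irrefl r" using that
      by (auto simp: N_set_def lin_orders_def strict_linear_order_on_def)
    then show False by (auto simp: irrefl_def dest: transD)
  qed
  have fin: "finite (N_set X y B)" for y
    by (rule finite_subset[OF _ finite_lin[OF assms(1)]]) (auto simp: N_set_def)
  show ?thesis unfolding eq
    by (rule sum.UNION_disjoint[symmetric]) (use fB fin disj in auto)
qed

lemma N_as_L:
  assumes "finite X" "A \<subseteq> X" "x \<in> A"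
  shows "(\<Sum>r\<in>N_set X x A. g r) =
         (\<Sum>A'\<in>{A'. A \<subseteq> A' \<and> A' \<subseteq> X}. \<Sum>r\<in>{r\<in>lin_orders X. Lof x r = A'}. g r)"
proof -
  have fN: "finite (N_set X x A)"
    by (rule finite_subset[OF _ finite_lin[OF assms(1)]]) (auto simp: N_set_def)
  have "(\<Sum>r\<in>N_set X x A. g r) =
        (\<Sum>A'\<in>{A'. A \<subseteq> A' \<and> A' \<subseteq> X}. \<Sum>r\<in>{r. r \<in> N_set X x A \<and> Lof x r = A'}. g r)"
  proof (rule sum.group[symmetric, OF fN finite_sup[OF assms(1)]])
    show "Lof x ` N_set X x A \<subseteq> {A'. A \<subseteq> A' \<and> A' \<subseteq> X}"
      using assms Lof_sub[of _ X x] by (auto simp: N_set_def Lof_def)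
  qed
  also have "\<dots> = (\<Sum>A'\<in>{A'. A \<subseteq> A' \<and> A' \<subseteq> X}. \<Sum>r\<in>{r\<in>lin_orders X. Lof x r = A'}. g r)"
  proof (rule sum.cong[OF refl])
    fix A' assume A': "A' \<in> {A'. A \<subseteq> A' \<and> A' \<subseteq> X}"
    have "{r. r \<in> N_set X x A \<and> Lof x r = A'} = {r\<in>lin_orders X. Lof x r = A'}"
      using A' by (auto simp: N_set_def Lof_def)
    then show "(\<Sum>r\<in>{r. r \<in> N_set X x A \<and> Lof x r = A'}. g r) = (\<Sum>r\<in>{r\<in>lin_orders X. Lof x r = A'}. g r)"
      by simp
  qed
  finally show ?thesis .
qed


lemma necessity:
  assumes finX: "finite X" and cons: "consistent_with_CDRU X p"
  shows "complete_monotonicity X p \<and> marginality X p"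
proof -
  obtain \<nu> t where nu: "is_distribution X \<nu>" and tt: "is_transition X t"
    and repall: "\<forall>A \<in> nonempty_subsets X. \<forall>B \<in> nonempty_subsets X. \<forall>x \<in> A. \<forall>y \<in> B.
       p x y A B = (\<Sum>r \<in> N_set X x A. \<Sum>r' \<in> N_set X y B. \<nu> r * t x r r')"
    using cons unfolding consistent_with_CDRU_def by blast
  have rep: "\<And>A B x y. A \<in> nonempty_subsets X \<Longrightarrow> B \<in> nonempty_subsets X \<Longrightarrow> x \<in> A \<Longrightarrow> y \<in> B \<Longrightarrow>
       p x y A B = (\<Sum>r \<in> N_set X x A. \<Sum>r' \<in> N_set X y B. \<nu> r * t x r r')"
    using repall by blast
  have nu_nn: "r \<in> lin_orders X \<Longrightarrow> \<nu> r \<ge> 0" for r using nu by (simp add: is_distribution_def)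
  have t_nn: "x \<in> X \<Longrightarrow> r \<in> lin_orders X \<Longrightarrow> r' \<in> lin_orders X \<Longrightarrow> t x r r' \<ge> 0" for x r r'
    using tt by (simp add: is_transition_def is_distribution_def)
  have t_sum: "x \<in> X \<Longrightarrow> r \<in> lin_orders X \<Longrightarrow> (\<Sum>r'\<in>lin_orders X. t x r r') = 1" for x r
    using tt by (simp add: is_transition_def is_distribution_def)
  have NL: "N_set X x A \<subseteq> lin_orders X" for x A by (auto simp: N_set_def)
  have margh: "(\<Sum>y\<in>B. p x y A B) = (\<Sum>r\<in>N_set X x A. \<nu> r)"
    if A: "A \<in> nonempty_subsets X" and B: "B \<in> nonempty_subsets X" and x: "x \<in> A" for A B x
  proof -
    have xX: "x \<in> X" using A x by (auto simp: nonempty_subsets_def)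
    have "(\<Sum>y\<in>B. p x y A B) = (\<Sum>y\<in>B. \<Sum>r \<in> N_set X x A. \<Sum>r' \<in> N_set X y B. \<nu> r * t x r r')"
      using rep[OF A B x] by simp
    also have "\<dots> = (\<Sum>r \<in> N_set X x A. \<nu> r * (\<Sum>y\<in>B. \<Sum>r' \<in> N_set X y B. t x r r'))"
      by (subst sum.swap) (simp add: sum_distrib_left)
    also have "\<dots> = (\<Sum>r \<in> N_set X x A. \<nu> r * (\<Sum>r'\<in>lin_orders X. t x r r'))"
      using B finX by (subst part) (auto simp: nonempty_subsets_def)
    also have "\<dots> = (\<Sum>r \<in> N_set X x A. \<nu> r)"
    proof (rule sum.cong[OF refl])
      fix r assume "r \<in> N_set X x A"
      then have "r \<in> lin_orders X" using NL by blast
      then show "\<nu> r * (\<Sum>r'\<in>lin_orders X. t x r r') = \<nu> r" using t_sum[OF xX] by simp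
    qed
    finally show ?thesis .
  qed
  have marg: "marginality X p"
    unfolding marginality_def using margh by simp
  have cm: "complete_monotonicity X p"
    unfolding complete_monotonicity_def
  proof (intro ballI)
    fix A B x y assume A: "A \<in> nonempty_subsets X" and B: "B \<in> nonempty_subsets X" and x: "x \<in> A" and y: "y \<in> B"
    have AX: "A \<subseteq> X" and BX: "B \<subseteq> X" using A B by (auto simp: nonempty_subsets_def)
    have xX: "x \<in> X" using AX x by auto
    define h where "h A' B' = (\<Sum>r\<in>{r\<in>lin_orders X. Lof x r = A'}. \<Sum>r'\<in>{r'\<in>lin_orders X. Lof y r' = B'}. \<nu> r * t x r r')" for A' B'
    have pz: "p x y A' B' = (\<Sum>A''\<in>{A''. A' \<subseteq> A'' \<and> A'' \<subseteq> X}. \<Sum>B''\<in>{B''. B' \<subseteq> B'' \<and> B'' \<subseteq> X}. h A'' B'')"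
      if A': "A' \<in> {A'. A \<subseteq> A' \<and> A' \<subseteq> X}" and B': "B' \<in> {B'. B \<subseteq> B' \<and> B' \<subseteq> X}" for A' B'
    proof -
      have A'n: "A' \<in> nonempty_subsets X" "x \<in> A'" using A' x by (auto simp: nonempty_subsets_def)
      have B'n: "B' \<in> nonempty_subsets X" "y \<in> B'" using B' y by (auto simp: nonempty_subsets_def)
      have "p x y A' B' = (\<Sum>r \<in> N_set X x A'. \<Sum>r' \<in> N_set X y B'. \<nu> r * t x r r')"
        by (rule rep[OF A'n(1) B'n(1) A'n(2) B'n(2)])
      also have "\<dots> = (\<Sum>r \<in> N_set X x A'. \<Sum>B''\<in>{B''. B' \<subseteq> B'' \<and> B'' \<subseteq> X}.
                          \<Sum>r'\<in>{r'\<in>lin_orders X. Lof y r' = B''}. \<nu> r * t x r r')"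
        using B' B'n by (intro sum.cong refl N_as_L finX) (auto simp: nonempty_subsets_def)
      also have "\<dots> = (\<Sum>A''\<in>{A''. A' \<subseteq> A'' \<and> A'' \<subseteq> X}. \<Sum>r\<in>{r\<in>lin_orders X. Lof x r = A''}.
                          \<Sum>B''\<in>{B''. B' \<subseteq> B'' \<and> B'' \<subseteq> X}.
                          \<Sum>r'\<in>{r'\<in>lin_orders X. Lof y r' = B''}. \<nu> r * t x r r')"
        using A' A'n by (intro N_as_L finX) (auto simp: nonempty_subsets_def)
      also have "\<dots> = (\<Sum>A''\<in>{A''. A' \<subseteq> A'' \<and> A'' \<subseteq> X}. \<Sum>B''\<in>{B''. B' \<subseteq> B'' \<and> B'' \<subseteq> X}. h A'' B'')"
        unfolding h_def by (rule sum.cong[OF refl], rule sum.swap)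
      finally show ?thesis .
    qed
    have "moebius_inverse X p x y A B =
       (\<Sum>A'\<in>{A'. A \<subseteq> A' \<and> A' \<subseteq> X}. \<Sum>B'\<in>{B'. B \<subseteq> B' \<and> B' \<subseteq> X}.
           (-1::real) ^ (card (A' - A) + card (B' - B)) *
           (\<Sum>A''\<in>{A''. A' \<subseteq> A'' \<and> A'' \<subseteq> X}. \<Sum>B''\<in>{B''. B' \<subseteq> B'' \<and> B'' \<subseteq> X}. h A'' B''))"
      unfolding moebius_inverse_def by (intro sum.cong refl) (simp add: pz)
    also have "\<dots> = h A B" by (rule mob2_2[OF finX AX BX])
    also have "\<dots> \<ge> 0" unfolding h_def
      by (intro sum_nonneg mult_nonneg_nonneg) (auto intro: nu_nn t_nn xX)
    finally show "moebius_inverse X p x y A B \<ge> 0" .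
  qed
  show ?thesis using cm marg by blast
qed


lemma mX: "moebius_inverse X p x y A X = (\<Sum>A'\<in>{A'. A \<subseteq> A' \<and> A' \<subseteq> X}. (-1::real) ^ card (A' - A) * p x y A' X)"
proof -
  have "{B'. X \<subseteq> B' \<and> B' \<subseteq> X} = {X}" by auto
  then show ?thesis unfolding moebius_inverse_def by simp
qed

lemma mXX: "moebius_inverse X p x y X X = p x y X X"
proof -
  have "{B'. X \<subseteq> B' \<and> B' \<subseteq> X} = {X}" by auto
  then show ?thesis unfolding moebius_inverse_def by simp
qed

lemma sufficiency:
  assumes finX: "finite X" and rule: "random_joint_choice_rule X p"
    and cm: "complete_monotonicity X p" and marg: "marginality X p"
  shows "consistent_with_CDRU X p"
proof (cases "X = {}")
  case True
  have "lin_orders X = {{}}" using True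
    by (auto simp: lin_orders_def strict_linear_order_on_def trans_def irrefl_def total_on_def)
  then have "is_distribution X (\<lambda>_. 1) \<and> is_transition X (\<lambda>_ _ _. 1)"
    using True by (simp add: is_distribution_def is_transition_def)
  then show ?thesis unfolding consistent_with_CDRU_def using True by (auto simp: nonempty_subsets_def)
next
  case Xne: False
  let ?U = "\<lambda>A. {A'. A \<subseteq> A' \<and> A' \<subseteq> X}"
  let ?mo = "moebius_inverse X p"
  have NS: "A \<in> nonempty_subsets X \<longleftrightarrow> A \<subseteq> X \<and> A \<noteq> {}" for A by (simp add: nonempty_subsets_def)
  have XNS: "X \<in> nonempty_subsets X" using Xne NS by auto
  have p_sum: "A \<subseteq> X \<Longrightarrow> A \<noteq> {} \<Longrightarrow> B \<subseteq> X \<Longrightarrow> B \<noteq> {} \<Longrightarrow> (\<Sum>x\<in>A. \<Sum>y\<in>B. p x y A B) = 1" for A B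
    using rule by (simp add: random_joint_choice_rule_def NS)
  have cmp: "A \<subseteq> X \<Longrightarrow> B \<subseteq> X \<Longrightarrow> x \<in> A \<Longrightarrow> y \<in> B \<Longrightarrow> ?mo x y A B \<ge> 0" for A B x y
    by (rule cm[unfolded complete_monotonicity_def, rule_format]) (auto simp: NS)
  have margp: "A \<subseteq> X \<Longrightarrow> x \<in> A \<Longrightarrow> B \<subseteq> X \<Longrightarrow> B \<noteq> {} \<Longrightarrow> (\<Sum>y\<in>B. p x y A B) = (\<Sum>y\<in>X. p x y A X)" for A B x
    by (rule marg[unfolded marginality_def, rule_format]) (auto simp: NS XNS)
  define q1 where "q1 x A = (\<Sum>y\<in>X. ?mo x y A X)" for x A
  define m where "m x A = (\<Sum>y\<in>X. p x y A X)" for x A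
  have q1_alt: "q1 x A = (\<Sum>A'\<in>?U A. (-1::real) ^ card (A' - A) * m x A')" for x A
    unfolding q1_def m_def mX by (subst sum.swap) (simp add: sum_distrib_left)
  have q1_nn: "A \<subseteq> X \<Longrightarrow> x \<in> A \<Longrightarrow> q1 x A \<ge> 0" for x A
    unfolding q1_def by (intro sum_nonneg cmp) auto
  have q1_tot: "(\<Sum>x\<in>X. q1 x X) = 1"
    unfolding q1_def mXX using p_sum[of X X] Xne by simp
  have q1_flow: "(\<Sum>x\<in>A. q1 x A) = (\<Sum>y\<in>X - A. q1 y (insert y A))"
    if "A \<subseteq> X" "A \<noteq> {}" "A \<noteq> X" for A
    unfolding q1_alt
  proof (rule flow[OF finX that])
    fix B assume "B \<subseteq> X" "B \<noteq> {}"
    then show "(\<Sum>x\<in>B. m x B) = 1" unfolding m_def using p_sum[of B X] Xne by simp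
  qed
  obtain \<nu> where nu_nn: "\<forall>r. \<nu> r \<ge> 0" and nu_sum: "(\<Sum>r\<in>lin_orders X. \<nu> r) = 1"
    and nu_L': "\<forall>A x. A \<subseteq> X \<longrightarrow> x \<in> A \<longrightarrow> (\<Sum>r\<in>{r\<in>lin_orders X. Lof x r = A}. \<nu> r) = q1 x A"
    using fal_exists[OF finX q1_nn q1_tot q1_flow] by blast
  note nu_L = nu_L'[rule_format]
  have tau_ex: "\<exists>\<tau>. is_distribution X \<tau> \<and> (\<forall>y B. B \<subseteq> X \<longrightarrow> y \<in> B \<longrightarrow>
       (\<Sum>r'\<in>N_set X y B. \<tau> r') * q1 x A = (\<Sum>B'\<in>?U B. ?mo x y A B'))"
    if xA: "A \<subseteq> X" "x \<in> A" for x A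
  proof -
    define m' where "m' y B = (\<Sum>A'\<in>?U A. (-1::real) ^ card (A' - A) * p x y A' B)" for y B
    have moa: "?mo x y A B = (\<Sum>B'\<in>?U B. (-1::real) ^ card (B' - B) * m' y B')" for y B
      unfolding moebius_inverse_def m'_def
      by (subst sum.swap) (simp add: sum_distrib_left power_add mult_ac)
    have mm: "(\<Sum>y\<in>B. m' y B) = (\<Sum>A'\<in>?U A. (-1::real) ^ card (A' - A) * (\<Sum>y\<in>B. p x y A' B))" for B
      unfolding m'_def by (subst sum.swap) (simp add: sum_distrib_left)
    have q1m: "q1 x A = (\<Sum>y\<in>X. m' y X)" unfolding q1_def mX m'_def ..
    have msum: "(\<Sum>y\<in>B. m' y B) = q1 x A" if B: "B \<subseteq> X" "B \<noteq> {}" for B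
    proof -
      have "(\<Sum>y\<in>B. m' y B) = (\<Sum>A'\<in>?U A. (-1::real) ^ card (A' - A) * (\<Sum>y\<in>X. p x y A' X))"
        unfolding mm
      proof (rule sum.cong[OF refl])
        fix A' assume "A' \<in> ?U A"
        then have "(\<Sum>y\<in>B. p x y A' B) = (\<Sum>y\<in>X. p x y A' X)" using xA B by (intro margp) auto
        then show "(-1::real) ^ card (A' - A) * (\<Sum>y\<in>B. p x y A' B) = (-1::real) ^ card (A' - A) * (\<Sum>y\<in>X. p x y A' X)"
          by simp
      qed
      also have "\<dots> = q1 x A" unfolding q1m mm[of X, symmetric] ..
      finally show ?thesis .
    qed
    have mflow: "(\<Sum>y\<in>B. ?mo x y A B) = (\<Sum>z\<in>X - B. ?mo x z A (insert z B))"
      if "B \<subseteq> X" "B \<noteq> {}" "B \<noteq> X" for B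
      unfolding moa by (rule flow[OF finX that msum])
    have zeta: "(\<Sum>B'\<in>?U B. ?mo x y A B') = m' y B" if "B \<subseteq> X" for y B
      unfolding moa by (rule mob1[OF finX that])
    show ?thesis
    proof (cases "q1 x A = 0")
      case True
      have z: "(\<Sum>B'\<in>?U B. ?mo x y A B') = 0" if B: "B \<subseteq> X" "y \<in> B" for y B
      proof -
        have fB: "finite B" using B finX finite_subset by auto
        have nn: "\<forall>y'\<in>B. m' y' B \<ge> 0"
        proof
          fix y' assume y': "y' \<in> B"
          have "(\<Sum>B'\<in>?U B. ?mo x y' A B') \<ge> 0" using y' xA by (intro sum_nonneg cmp) auto
          then show "m' y' B \<ge> 0" using zeta[OF B(1)] by simp
        qed
        have "(\<Sum>y'\<in>B. m' y' B) = 0" using msum[of B] True B by auto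
        then have "\<forall>y'\<in>B. m' y' B = 0" using sum_nonneg_eq_0_iff[OF fB, of "\<lambda>y'. m' y' B"] nn by simp
        then have "m' y B = 0" using B by blast
        then show ?thesis using zeta[OF B(1)] by simp
      qed
      show ?thesis
      proof (intro exI[of _ \<nu>] conjI allI impI)
        show "is_distribution X \<nu>" using nu_nn nu_sum by (simp add: is_distribution_def)
      next
        fix y B assume "B \<subseteq> X" "y \<in> B"
        then show "(\<Sum>r'\<in>N_set X y B. \<nu> r') * q1 x A = (\<Sum>B'\<in>?U B. ?mo x y A B')"
          using z True by simp
      qed
    next
      case False
      then have qpos: "q1 x A > 0" using q1_nn[OF xA] by linarith
      define qq where "qq y B = ?mo x y A B / q1 x A" for y B
      have qq_nn: "qq y B \<ge> 0" if "B \<subseteq> X" "y \<in> B" for y B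
        unfolding qq_def using cmp[OF xA(1) that(1) xA(2) that(2)] qpos by simp
      have qq_tot: "(\<Sum>y\<in>X. qq y X) = 1"
        unfolding qq_def sum_divide_distrib[symmetric] q1_def[symmetric] using qpos by simp
      have qq_flow: "(\<Sum>y\<in>B. qq y B) = (\<Sum>z\<in>X - B. qq z (insert z B))"
        if "B \<subseteq> X" "B \<noteq> {}" "B \<noteq> X" for B
        unfolding qq_def sum_divide_distrib[symmetric] using mflow[OF that] by simp
      obtain \<tau> where tau_nn: "\<forall>r. \<tau> r \<ge> 0" and tau_sum: "(\<Sum>r\<in>lin_orders X. \<tau> r) = 1"
        and tau_L': "\<forall>B y. B \<subseteq> X \<longrightarrow> y \<in> B \<longrightarrow> (\<Sum>r\<in>{r\<in>lin_orders X. Lof y r = B}. \<tau> r) = qq y B"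
        using fal_exists[OF finX qq_nn qq_tot qq_flow] by blast
      note tau_L = tau_L'[rule_format]
      show ?thesis
      proof (intro exI[of _ \<tau>] conjI allI impI)
        show "is_distribution X \<tau>" using tau_nn tau_sum by (simp add: is_distribution_def)
      next
        fix y B assume B: "B \<subseteq> X" "y \<in> B"
        have "(\<Sum>r'\<in>N_set X y B. \<tau> r') = (\<Sum>B'\<in>?U B. \<Sum>r\<in>{r\<in>lin_orders X. Lof y r = B'}. \<tau> r)"
          by (rule N_as_L[OF finX B])
        also have "\<dots> = (\<Sum>B'\<in>?U B. qq y B')"
          by (rule sum.cong[OF refl], rule tau_L) (use B in auto)
        also have "\<dots> = (\<Sum>B'\<in>?U B. ?mo x y A B') / q1 x A"
          unfolding qq_def by (rule sum_divide_distrib[symmetric])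
        finally show "(\<Sum>r'\<in>N_set X y B. \<tau> r') * q1 x A = (\<Sum>B'\<in>?U B. ?mo x y A B')"
          using qpos by simp
      qed
    qed
  qed
  define T where "T x A = (SOME \<tau>. is_distribution X \<tau> \<and> (\<forall>y B. B \<subseteq> X \<longrightarrow> y \<in> B \<longrightarrow>
       (\<Sum>r'\<in>N_set X y B. \<tau> r') * q1 x A = (\<Sum>B'\<in>?U B. ?mo x y A B')))" for x A
  have T: "is_distribution X (T x A) \<and> (\<forall>y B. B \<subseteq> X \<longrightarrow> y \<in> B \<longrightarrow>
       (\<Sum>r'\<in>N_set X y B. T x A r') * q1 x A = (\<Sum>B'\<in>?U B. ?mo x y A B'))"
    if "A \<subseteq> X" "x \<in> A" for x A
    unfolding T_def by (rule someI_ex[OF tau_ex[OF that]])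
  define t where "t x r = T x (Lof x r)" for x r
  show ?thesis unfolding consistent_with_CDRU_def
  proof (intro exI[of _ \<nu>] exI[of _ t] conjI ballI)
    show "is_distribution X \<nu>" using nu_nn nu_sum by (simp add: is_distribution_def)
  next
    show "is_transition X t" unfolding is_transition_def
    proof (intro ballI)
      fix x r assume "x \<in> X" "r \<in> lin_orders X"
      then have L: "Lof x r \<subseteq> X" "x \<in> Lof x r" using Lof_sub[of r X x] by (auto simp: Lof_def)
      show "is_distribution X (t x r)" unfolding t_def using T[OF L] by (rule conjunct1)
    qed
  next
    fix A B x y assume A: "A \<in> nonempty_subsets X" and B: "B \<in> nonempty_subsets X" and x: "x \<in> A" and y: "y \<in> B"
    have AX: "A \<subseteq> X" and BX: "B \<subseteq> X" using A B by (auto simp: NS)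
    define G where "G A' = (\<Sum>r'\<in>N_set X y B. T x A' r')" for A'
    have "(\<Sum>r\<in>N_set X x A. \<Sum>r'\<in>N_set X y B. \<nu> r * t x r r') = (\<Sum>r\<in>N_set X x A. \<nu> r * G (Lof x r))"
      by (simp add: t_def G_def sum_distrib_left)
    also have "\<dots> = (\<Sum>A'\<in>?U A. \<Sum>r\<in>{r\<in>lin_orders X. Lof x r = A'}. \<nu> r * G (Lof x r))"
      by (rule N_as_L[OF finX AX x])
    also have "\<dots> = (\<Sum>A'\<in>?U A. q1 x A' * G A')"
    proof (rule sum.cong[OF refl])
      fix A' assume A': "A' \<in> ?U A"
      have "(\<Sum>r\<in>{r\<in>lin_orders X. Lof x r = A'}. \<nu> r * G (Lof x r))
          = (\<Sum>r\<in>{r\<in>lin_orders X. Lof x r = A'}. \<nu> r * G A')"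
        by (rule sum.cong) auto
      also have "\<dots> = (\<Sum>r\<in>{r\<in>lin_orders X. Lof x r = A'}. \<nu> r) * G A'"
        by (rule sum_distrib_right[symmetric])
      also have "\<dots> = q1 x A' * G A'" using nu_L[of A' x] A' x by auto
      finally show "(\<Sum>r\<in>{r\<in>lin_orders X. Lof x r = A'}. \<nu> r * G (Lof x r)) = q1 x A' * G A'" .
    qed
    also have "\<dots> = (\<Sum>A'\<in>?U A. \<Sum>B'\<in>?U B. ?mo x y A' B')"
    proof (rule sum.cong[OF refl])
      fix A' assume A': "A' \<in> ?U A"
      then have L: "A' \<subseteq> X" "x \<in> A'" using x by auto
      have "G A' * q1 x A' = (\<Sum>B'\<in>?U B. ?mo x y A' B')"
        unfolding G_def using conjunct2[OF T[OF L], rule_format, OF BX y] .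
      then show "q1 x A' * G A' = (\<Sum>B'\<in>?U B. ?mo x y A' B')" by (simp add: mult.commute)
    qed
    also have "\<dots> = p x y A B"
      unfolding moebius_inverse_def by (rule mob1_2[OF finX AX BX])
    finally show "p x y A B = (\<Sum>r\<in>N_set X x A. \<Sum>r'\<in>N_set X y B. \<nu> r * t x r r')" by simp
  qed
qed


theorem theorem5:
  fixes X :: "'a set" and p :: "'a \<Rightarrow> 'a \<Rightarrow> 'a set \<Rightarrow> 'a set \<Rightarrow> real"
  assumes "finite X" and "random_joint_choice_rule X p"
  shows "consistent_with_CDRU X p \<longleftrightarrow> complete_monotonicity X p \<and> marginality X p"
  using necessity[OF assms(1)] sufficiency[OF assms] by blast

end
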